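(* Let $V=\{1,\dots,n\}$ and let $D,D'$ be self-adjoint $n\times n$ complex matrices, with associated weighted graphs $G$ and $G'$ on $V$, both connected. Suppose there are pairs $(i_1,j_1),\dots,(i_k,j_k)$ of distinct vertices such that the $2k$ vertices $i_1,j_1,\dots,i_k,j_k$ are pairwise distinct (the edges $\{i_s,j_s\}$ are pairwise unconnected), such that $D$ and $D'$ have the same entries except at the positions $(i_s,j_s)$ and $(j_s,i_s)$, and such that for each $s$ exactly one of $D_{i_sj_s}$, $D'_{i_sj_s}$ is zero and the other has modulus $1/w_s$ with $w_s\in(0,\infty)$ (so $G$ and $G'$ differ by addition or deletion of the edges $\{i_s,j_s\}$ of weights $w_s$). Let $x,y\in V$, let $d=d^D(x,y)$, $d'=d^{D'}(x,y)$, and put $$m=\max_{s=1,\dots,k}\frac{d^D(i_s,j_s)}{w_s},\qquad m'=\max_{s=1,\dots,k}\frac{d^{D'}(i_s,j_s)}{w_s}.$$ Then $$\frac{d}{1+m}\le d'\le (1+m')\,d.$$ In the particular case where $k=1$ and the single added/removed edge, of weight $w$, connects $x$ and $y$, one has $$\left|\frac{1}{d}-\frac{1}{d'}\right|\le\frac{1}{w}.$$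
   Context: For a self-adjoint $n\times n$ matrix $M$, the weighted graph associated with $M$ has vertex set $\{1,\dots,n\}$ and an edge $\{i,j\}$ ($i\neq j$) of weight $|M_{ij}|^{-1}$ whenever $M_{ij}\neq 0$. The noncommutative distance is $d^M(i,j)=\sup\{|a(i)-a(j)| : a\in\mathbb{C}^n,\ \|[M,\pi(a)]\|\le 1\}$, where $\pi(a)=\mathrm{diag}(a(1),\dots,a(n))$ and $\|\cdot\|$ is the operator norm. *)

theory Defs
  imports "HOL-Analysis.Analysis"
begin

text \<open>Vertex set V = {1..n} is modelled by a finite index type 'n; matrices are
  complex^'n^'n, vectors complex^'n with the Euclidean (l2) norm, so onorm is the
  usual operator norm.\<close>

definition self_adjoint :: "complex^'n^'n \<Rightarrow> bool" where
  "self_adjoint M \<longleftrightarrow> (\<forall>i j. M$i$j = cnj (M$j$i))"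

definition diag_mat :: "('n::finite \<Rightarrow> complex) \<Rightarrow> complex^'n^'n" where
  "diag_mat a = (\<chi> i j. if i = j then a i else 0)"

definition commutator_norm :: "complex^'n^'n \<Rightarrow> ('n::finite \<Rightarrow> complex) \<Rightarrow> real" where
  "commutator_norm M a = onorm (\<lambda>v::complex^'n. (M ** diag_mat a - diag_mat a ** M) *v v)"

definition nc_dist :: "complex^'n^'n \<Rightarrow> 'n::finite \<Rightarrow> 'n \<Rightarrow> real" where
  "nc_dist M i j = Sup {cmod (a i - a j) | a. commutator_norm M a \<le> 1}"

text \<open>Edge relation of the weighted graph associated with M (weights |M_ij|^-1 do
  not affect connectivity).\<close>
definition graph_edges :: "complex^'n^'n \<Rightarrow> ('n \<times> 'n) set" where
  "graph_edges M = {(i, j). i \<noteq> j \<and> M$i$j \<noteq> 0}"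

definition graph_connected :: "complex^'n^'n \<Rightarrow> bool" where
  "graph_connected M \<longleftrightarrow> (\<forall>i j. (i, j) \<in> (graph_edges M)\<^sup>*)"

end

theory Submission
  imports Defs
begin

definition comm :: "complex^'n^'n \<Rightarrow> ('n::finite \<Rightarrow> complex) \<Rightarrow> complex^'n^'n" where
  "comm M a = M ** diag_mat a - diag_mat a ** M"

lemma comm_entry: "comm M a $ p $ q = M$p$q * (a q - a p)"
proof -
  have 1: "(\<Sum>r\<in>UNIV. M$p$r * (if r = q then a r else 0)) = M$p$q * a q"
    by (simp add: if_distrib cong: if_cong)
  have 2: "(\<Sum>r\<in>UNIV. (if p = r then a p else 0) * M$r$q) = a p * M$p$q"
  proof -
    have eq: "(\<lambda>r. (if p = r then a p else 0) * M$r$q) = (\<lambda>r. if p = r then a p * M$p$q else 0)"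
      by auto
    show ?thesis by (subst eq) simp
  qed
  show ?thesis
    unfolding comm_def diag_mat_def matrix_matrix_mult_def
    using 1 2 by (simp add: algebra_simps)
qed

lemma cn_comm: "commutator_norm M a = onorm ((*v) (comm M a))"
  unfolding commutator_norm_def comm_def by simp

lemma entry_le: "cmod (A$p$q) \<le> onorm ((*v) (A::complex^'n::finite^'n))"
proof -
  have e: "(A *v axis q 1) $ p = A$p$q"
    unfolding matrix_vector_mult_def axis_def by (simp add: if_distrib cong: if_cong)
  have "cmod ((A *v axis q 1) $ p) \<le> norm (A *v axis q 1)" by (rule Finite_Cartesian_Product.norm_nth_le)
  also have "\<dots> \<le> onorm ((*v) A) * norm (axis q (1::complex))"
    by (rule onorm[OF matrix_vector_mul_bounded_linear])
  finally show ?thesis using e by (simp add: norm_axis_1)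
qed

lemma sum_single_nz:
  fixes f :: "'n::finite \<Rightarrow> 'b::comm_monoid_add"
  assumes "\<And>q. q \<noteq> q0 \<Longrightarrow> f q = 0"
  shows "(\<Sum>q\<in>UNIV. f q) = f q0"
proof -
  have "(\<Sum>q\<in>UNIV. f q) = f q0 + (\<Sum>q\<in>UNIV - {q0}. f q)"
    by (rule sum.remove) auto
  also have "(\<Sum>q\<in>UNIV - {q0}. f q) = 0" by (rule sum.neutral) (use assms in auto)
  finally show ?thesis by simp
qed

lemma sparse_onorm:
  fixes B :: "complex^'n::finite^'n"
  assumes row: "\<And>p q q'. B$p$q \<noteq> 0 \<Longrightarrow> B$p$q' \<noteq> 0 \<Longrightarrow> q = q'"
    and col: "\<And>p p' q. B$p$q \<noteq> 0 \<Longrightarrow> B$p'$q \<noteq> 0 \<Longrightarrow> p = p'"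
    and bnd: "\<And>p q. cmod (B$p$q) \<le> M" and M0: "0 \<le> M"
  shows "onorm ((*v) B) \<le> M"
proof (rule onorm_bound[OF M0])
  fix v :: "complex^'n"
  have rowsq: "(cmod ((B *v v)$p))^2 \<le> (\<Sum>q\<in>UNIV. (cmod (B$p$q))^2 * (cmod (v$q))^2)" for p
  proof (cases "\<exists>q. B$p$q \<noteq> 0")
    case True
    then obtain q0 where q0: "B$p$q0 \<noteq> 0" by auto
    have "(B *v v)$p = (\<Sum>q\<in>UNIV. B$p$q * v$q)" by (simp add: matrix_vector_mult_def)
    also have "\<dots> = B$p$q0 * v$q0"
      proof (rule sum_single_nz)
      fix q assume "q \<noteq> q0"
      then have "B$p$q = 0" using row[OF _ q0] by blast
      then show "B$p$q * v$q = 0" by simp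
    qed
    finally have "(cmod ((B *v v)$p))^2 = (cmod (B$p$q0))^2 * (cmod (v$q0))^2"
      by (simp add: norm_mult power_mult_distrib)
    also have "\<dots> \<le> (\<Sum>q\<in>UNIV. (cmod (B$p$q))^2 * (cmod (v$q))^2)"
      by (rule member_le_sum) auto
    finally show ?thesis .
  next
    case False
    then have "(B *v v)$p = 0" by (simp add: matrix_vector_mult_def)
    then show ?thesis by (simp add: sum_nonneg)
  qed
  have colsum: "(\<Sum>p\<in>UNIV. (cmod (B$p$q))^2) \<le> M^2" for q
  proof (cases "\<exists>p. B$p$q \<noteq> 0")
    case True
    then obtain p0 where p0: "B$p0$q \<noteq> 0" by auto
    have "(\<Sum>p\<in>UNIV. (cmod (B$p$q))^2) = (cmod (B$p0$q))^2"
      proof (rule sum_single_nz)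
      fix p assume "p \<noteq> p0"
      then have "B$p$q = 0" using col[OF _ p0] by blast
      then show "(cmod (B$p$q))^2 = 0" by simp
    qed
    also have "\<dots> \<le> M^2" using bnd[of p0 q] by (simp add: power_mono)
    finally show ?thesis .
  next
    case False
    then show ?thesis by simp
  qed
  have "(norm (B *v v))^2 = (\<Sum>p\<in>UNIV. (cmod ((B *v v)$p))^2)"
    by (simp add: norm_vec_def L2_set_def sum_nonneg)
  also have "\<dots> \<le> (\<Sum>p\<in>UNIV. \<Sum>q\<in>UNIV. (cmod (B$p$q))^2 * (cmod (v$q))^2)"
    by (rule sum_mono) (rule rowsq)
  also have "\<dots> = (\<Sum>q\<in>UNIV. \<Sum>p\<in>UNIV. (cmod (B$p$q))^2 * (cmod (v$q))^2)"
    by (rule sum.swap)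
  also have "\<dots> = (\<Sum>q\<in>UNIV. (cmod (v$q))^2 * (\<Sum>p\<in>UNIV. (cmod (B$p$q))^2))"
    by (simp add: sum_distrib_left mult.commute)
  also have "\<dots> \<le> (\<Sum>q\<in>UNIV. (cmod (v$q))^2 * M^2)"
    by (rule sum_mono) (simp add: colsum mult_left_mono)
  also have "\<dots> = (M * norm v)^2"
    by (simp add: norm_vec_def L2_set_def sum_nonneg sum_distrib_left power_mult_distrib mult.commute)
  finally show "norm (B *v v) \<le> M * norm v"
    by (rule power2_le_imp_le) (simp add: M0)
qed

lemma feasible_edge:
  assumes "commutator_norm M a \<le> 1"
  shows "cmod (M$p$q) * cmod (a q - a p) \<le> 1"
proof -
  have "cmod (comm M a $ p $ q) \<le> commutator_norm M a"
    unfolding cn_comm by (rule entry_le)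
  then show ?thesis using assms by (simp add: comm_entry norm_mult)
qed

lemma conn_bound:
  fixes M :: "complex^'n::finite^'n"
  assumes "(i, j) \<in> (graph_edges M)\<^sup>*"
  shows "\<exists>B. \<forall>a. commutator_norm M a \<le> 1 \<longrightarrow> cmod (a i - a j) \<le> B"
  using assms
proof (induction rule: rtrancl_induct)
  case base
  then show ?case by auto
next
  case (step j l)
  then obtain B where B: "\<forall>a. commutator_norm M a \<le> 1 \<longrightarrow> cmod (a i - a j) \<le> B" by auto
  from step(2) have nz: "M$j$l \<noteq> 0" by (simp add: graph_edges_def)
  show ?case
  proof (intro exI allI impI)
    fix a assume a: "commutator_norm M a \<le> 1"
    have "cmod (M$j$l) * cmod (a l - a j) \<le> 1" by (rule feasible_edge[OF a])
    then have e: "cmod (a l - a j) \<le> 1 / cmod (M$j$l)"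
      using nz by (simp add: field_simps mult.commute)
    have "cmod (a i - a l) = cmod ((a i - a j) + (a j - a l))" by simp
    also have "\<dots> \<le> cmod (a i - a j) + cmod (a j - a l)" by (rule norm_triangle_ineq)
    also have "cmod (a j - a l) = cmod (a l - a j)" by (rule norm_minus_commute)
    finally have t: "cmod (a i - a l) \<le> cmod (a i - a j) + cmod (a l - a j)" .
    have "cmod (a i - a j) \<le> B" using B a by blast
    then show "cmod (a i - a l) \<le> B + 1 / cmod (M$j$l)" using t e by linarith
  qed
qed

definition feas_set :: "complex^'n^'n \<Rightarrow> 'n::finite \<Rightarrow> 'n \<Rightarrow> real set" where
  "feas_set M i j = {cmod (a i - a j) | a. commutator_norm M a \<le> 1}"

lemma nc_dist_feas: "nc_dist M i j = Sup (feas_set M i j)"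
  unfolding nc_dist_def feas_set_def by simp

lemma cn_zero: "commutator_norm M (\<lambda>_. 0) = 0"
proof -
  have "comm M (\<lambda>_. 0) = 0" by (simp add: vec_eq_iff comm_entry)
  then have "(*v) (comm M (\<lambda>_. 0)) = (\<lambda>v. 0)" by (simp add: fun_eq_iff)
  then show ?thesis unfolding cn_comm by (simp add: onorm_zero)
qed

lemma feas_nonempty: "feas_set M i j \<noteq> {}"
proof -
  have "cmod ((\<lambda>_. 0::complex) i - (\<lambda>_. 0) j) \<in> feas_set M i j"
    unfolding feas_set_def by (rule CollectI, rule exI[of _ "\<lambda>_. 0"]) (simp add: cn_zero)
  then show ?thesis by blast
qed

lemma feas_bdd:
  assumes "graph_connected M"
  shows "bdd_above (feas_set M i j)"
proof -
  obtain B where "\<forall>a. commutator_norm M a \<le> 1 \<longrightarrow> cmod (a i - a j) \<le> B"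
    using conn_bound assms unfolding graph_connected_def by blast
  then show ?thesis unfolding feas_set_def bdd_above_def by blast
qed

lemma nc_upper:
  assumes "graph_connected M" "commutator_norm M a \<le> 1"
  shows "cmod (a i - a j) \<le> nc_dist M i j"
  unfolding nc_dist_feas
  by (rule cSup_upper) (use assms feas_bdd in \<open>auto simp: feas_set_def\<close>)

lemma nc_nonneg:
  assumes "graph_connected M"
  shows "0 \<le> nc_dist M i j"
  using cn_zero[of M] nc_upper[OF assms, of "\<lambda>_. 0"] by simp

lemma nc_least:
  assumes "\<And>a. commutator_norm M a \<le> 1 \<Longrightarrow> cmod (a i - a j) \<le> c"
  shows "nc_dist M i j \<le> c"
  unfolding nc_dist_feas
  by (rule cSup_least[OF feas_nonempty]) (use assms in \<open>auto simp: feas_set_def\<close>)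

lemma nc_sym: "nc_dist M i j = nc_dist M j i"
  unfolding nc_dist_def by (simp add: norm_minus_commute)

lemma mv_scaleR: "(c *\<^sub>R (X::complex^'n::finite^'m)) *v v = c *\<^sub>R (X *v v)"
  by (simp add: vec_eq_iff matrix_vector_mult_def scaleR_sum_right)

lemma cn_scale: "commutator_norm M (\<lambda>p. complex_of_real c * a p) = \<bar>c\<bar> * commutator_norm M a"
proof -
  have eq1: "comm M (\<lambda>p. complex_of_real c * a p) = c *\<^sub>R comm M a"
  proof -
    have "(c *\<^sub>R comm M a) $ p $ q = complex_of_real c * (M$p$q * (a q - a p))" for p q
      by (simp only: vector_scaleR_component) (simp add: comm_entry scaleR_conv_of_real)
    then show ?thesis by (simp add: vec_eq_iff comm_entry algebra_simps)
  qed
  have "(*v) (comm M (\<lambda>p. complex_of_real c * a p)) = (\<lambda>v. c *\<^sub>R (comm M a *v v))"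
    by (rule ext) (simp only: eq1 mv_scaleR)
  then show ?thesis unfolding cn_comm
    by (simp add: onorm_scaleR matrix_vector_mul_bounded_linear)
qed

lemma cn_nonneg: "0 \<le> commutator_norm M a"
  unfolding cn_comm by (rule onorm_pos_le[OF matrix_vector_mul_bounded_linear])

lemma nc_pos:
  assumes "graph_connected M" "x \<noteq> y"
  shows "0 < nc_dist M x y"
proof -
  define a where "a = (\<lambda>p. if p = x then (1::complex) else 0)"
  define K where "K = commutator_norm M a"
  have K0: "0 \<le> K" unfolding K_def by (rule cn_nonneg)
  define c where "c = 1 / (1 + K)"
  have c0: "0 < c" using K0 by (simp add: c_def)
  have "commutator_norm M (\<lambda>p. complex_of_real c * a p) = c * K"
    using c0 by (simp add: cn_scale K_def)
  also have "\<dots> \<le> 1" using K0 by (simp add: c_def)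
  finally have "cmod (complex_of_real c * a x - complex_of_real c * a y) \<le> nc_dist M x y"
    by (rule nc_upper[OF assms(1)])
  then show ?thesis using c0 assms(2) by (simp add: a_def)
qed

lemma recip_bound:
  fixes d d' w :: real
  assumes "0 < d" "0 < d'" "0 < w" "d \<le> (1 + d / w) * d'" "d' \<le> (1 + d' / w) * d"
  shows "\<bar>1 / d - 1 / d'\<bar> \<le> 1 / w"
proof -
  have h1: "w * d \<le> w * d' + d * d'" using assms(4) assms(3)
    by (simp add: field_simps)
  have h2: "w * d' \<le> w * d + d' * d" using assms(5) assms(3)
    by (simp add: field_simps)
  have "1 / d' - 1 / d \<le> 1 / w" using h1 assms(1-3) by (simp add: field_simps)
  moreover have "1 / d - 1 / d' \<le> 1 / w" using h2 assms(1-3) by (simp add: field_simps)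
  ultimately show ?thesis by (simp add: abs_le_iff)
qed

lemma core:
  fixes D D' :: "complex^'n::finite^'n"
    and k :: nat and i j :: "nat \<Rightarrow> 'n" and w :: "nat \<Rightarrow> real" and x y :: 'n
  assumes sa: "self_adjoint D" and sa': "self_adjoint D'"
    and cD: "graph_connected D" and cD': "graph_connected D'"
    and k1: "k \<ge> 1"
    and ne: "\<forall>s<k. i s \<noteq> j s"
    and disj: "\<forall>s<k. \<forall>t<k. s \<noteq> t \<longrightarrow> {i s, j s} \<inter> {i t, j t} = {}"
    and eq: "\<forall>p q. (\<forall>s<k. (p, q) \<noteq> (i s, j s) \<and> (p, q) \<noteq> (j s, i s)) \<longrightarrow> D$p$q = D'$p$q"
    and wt: "\<forall>s<k. w s > 0 \<and>
           ((D$(i s)$(j s) = 0 \<and> cmod (D'$(i s)$(j s)) = 1 / w s) \<or>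
            (D'$(i s)$(j s) = 0 \<and> cmod (D$(i s)$(j s)) = 1 / w s))"
  shows "0 \<le> Max ((\<lambda>s. nc_dist D (i s) (j s) / w s) ` {..<k})"
    and "nc_dist D x y \<le> (1 + Max ((\<lambda>s. nc_dist D (i s) (j s) / w s) ` {..<k})) * nc_dist D' x y"
proof -
  define m where "m = Max ((\<lambda>s. nc_dist D (i s) (j s) / w s) ` {..<k})"
  have mge: "nc_dist D (i s) (j s) / w s \<le> m" if "s < k" for s
    unfolding m_def by (rule Max_ge) (use that in auto)
  have m0: "0 \<le> m"
  proof -
    have "0 < w 0" using wt k1 by auto
    then have "0 \<le> nc_dist D (i 0) (j 0) / w 0" using nc_nonneg[OF cD] by simp
    also have "\<dots> \<le> m" using mge k1 by auto
    finally show ?thesis .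
  qed
  then show "0 \<le> Max ((\<lambda>s. nc_dist D (i s) (j s) / w s) ` {..<k})" by (simp add: m_def)
  have Ediff: "\<exists>s<k. (p,q) = (i s, j s) \<or> (p,q) = (j s, i s)" if "D'$p$q \<noteq> D$p$q" for p q
  proof (rule ccontr)
    assume "\<not> (\<exists>s<k. (p,q) = (i s, j s) \<or> (p,q) = (j s, i s))"
    then have "\<forall>s<k. (p, q) \<noteq> (i s, j s) \<and> (p, q) \<noteq> (j s, i s)" by blast
    then have "D$p$q = D'$p$q" using eq by blast
    with that show False by simp
  qed
  have Ecm: "cmod (D'$(i s)$(j s) - D$(i s)$(j s)) = 1 / w s" if "s < k" for s
  proof -
    from wt that have "(D$(i s)$(j s) = 0 \<and> cmod (D'$(i s)$(j s)) = 1 / w s) \<or>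
            (D'$(i s)$(j s) = 0 \<and> cmod (D$(i s)$(j s)) = 1 / w s)" by blast
    then show ?thesis
    proof
      assume "D$(i s)$(j s) = 0 \<and> cmod (D'$(i s)$(j s)) = 1 / w s"
      then show ?thesis by simp
    next
      assume "D'$(i s)$(j s) = 0 \<and> cmod (D$(i s)$(j s)) = 1 / w s"
      then show ?thesis by simp
    qed
  qed
  have Ecm2: "cmod (D'$(j s)$(i s) - D$(j s)$(i s)) = 1 / w s" if "s < k" for s
  proof -
    have "D'$(j s)$(i s) - D$(j s)$(i s) = cnj (D'$(i s)$(j s) - D$(i s)$(j s))"
      using sa[unfolded self_adjoint_def, rule_format, of "j s" "i s"]
        sa'[unfolded self_adjoint_def, rule_format, of "j s" "i s"] by simp
    then show ?thesis using Ecm[OF that] by (simp only: complex_mod_cnj)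
  qed
  show "nc_dist D x y \<le> (1 + Max ((\<lambda>s. nc_dist D (i s) (j s) / w s) ` {..<k})) * nc_dist D' x y"
    unfolding m_def[symmetric]
  proof (rule nc_least)
    fix a assume a: "commutator_norm D a \<le> 1"
    define B where "B = comm D' a - comm D a"
    have Bent: "B$p$q = (D'$p$q - D$p$q) * (a q - a p)" for p q
      by (simp add: B_def comm_entry algebra_simps)
    have Bnz: "\<exists>s<k. (p,q) = (i s, j s) \<or> (p,q) = (j s, i s)" if "B$p$q \<noteq> 0" for p q
    proof -
      have "D'$p$q \<noteq> D$p$q" using that Bent by auto
      then show ?thesis by (rule Ediff)
    qed
    have same: "s = t" if "s < k" "t < k" "p \<in> {i s, j s}" "p \<in> {i t, j t}" for s t p
    proof (rule ccontr)
      assume "s \<noteq> t"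
      then have "{i s, j s} \<inter> {i t, j t} = {}" using disj that by blast
      then show False using that by blast
    qed
    have row: "q = q'" if nz1: "B$p$q \<noteq> 0" and nz2: "B$p$q' \<noteq> 0" for p q q'
    proof -
      obtain s where s: "s < k" "(p,q) = (i s, j s) \<or> (p,q) = (j s, i s)" using Bnz[OF nz1] by blast
      obtain t where t: "t < k" "(p,q') = (i t, j t) \<or> (p,q') = (j t, i t)" using Bnz[OF nz2] by blast
      have "s = t" by (rule same[OF s(1) t(1), of p]) (use s t in auto)
      then show ?thesis using s t ne by auto
    qed
    have col: "p = p'" if nz1: "B$p$q \<noteq> 0" and nz2: "B$p'$q \<noteq> 0" for p p' q
    proof -
      obtain s where s: "s < k" "(p,q) = (i s, j s) \<or> (p,q) = (j s, i s)" using Bnz[OF nz1] by blast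
      obtain t where t: "t < k" "(p',q) = (i t, j t) \<or> (p',q) = (j t, i t)" using Bnz[OF nz2] by blast
      have "s = t" by (rule same[OF s(1) t(1), of q]) (use s t in auto)
      then show ?thesis using s t ne by auto
    qed
    have bnd: "cmod (B$p$q) \<le> m" for p q
    proof (cases "B$p$q = 0")
      case True
      then show ?thesis using m0 by simp
    next
      case False
      obtain s where s: "s < k" "(p,q) = (i s, j s) \<or> (p,q) = (j s, i s)" using Bnz[OF False] by blast
      have ws: "0 < w s" using wt s(1) by auto
      have ad: "cmod (a (i s) - a (j s)) \<le> nc_dist D (i s) (j s)" by (rule nc_upper[OF cD a])
      have "cmod (B$p$q) = (1 / w s) * cmod (a (i s) - a (j s))"
        using s(2)
      proof
        assume "(p,q) = (i s, j s)"
        then have pq: "p = i s" "q = j s" by auto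
        have "cmod (B$p$q) = cmod (D'$(i s)$(j s) - D$(i s)$(j s)) * cmod (a (j s) - a (i s))"
          by (simp add: Bent pq norm_mult)
        also have "cmod (a (j s) - a (i s)) = cmod (a (i s) - a (j s))" by (rule norm_minus_commute)
        finally show ?thesis using Ecm[OF s(1)] by simp
      next
        assume "(p,q) = (j s, i s)"
        then have pq: "p = j s" "q = i s" by auto
        have "cmod (B$p$q) = cmod (D'$(j s)$(i s) - D$(j s)$(i s)) * cmod (a (i s) - a (j s))"
          by (simp add: Bent pq norm_mult)
        then show ?thesis using Ecm2[OF s(1)] by simp
      qed
      also have "\<dots> \<le> (1 / w s) * nc_dist D (i s) (j s)"
        by (rule mult_left_mono[OF ad]) (use ws in simp)
      also have "\<dots> = nc_dist D (i s) (j s) / w s" by simp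
      also have "\<dots> \<le> m" by (rule mge[OF s(1)])
      finally show ?thesis .
    qed
    have onB: "onorm ((*v) B) \<le> m" by (rule sparse_onorm[OF row col bnd m0])
    have "commutator_norm D' a = onorm (\<lambda>v. comm D a *v v + B *v v)"
      unfolding cn_comm B_def by (simp add: matrix_vector_mult_add_rdistrib[symmetric])
    also have "\<dots> \<le> onorm ((*v) (comm D a)) + onorm ((*v) B)"
      by (rule onorm_triangle[OF matrix_vector_mul_bounded_linear matrix_vector_mul_bounded_linear])
    also have "\<dots> \<le> 1 + m" using a onB unfolding cn_comm by simp
    finally have cD'a: "commutator_norm D' a \<le> 1 + m" .
    define c where "c = 1 / (1 + m)"
    have c0: "0 < c" using m0 by (simp add: c_def)
    have "commutator_norm D' (\<lambda>p. complex_of_real c * a p) = c * commutator_norm D' a"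
      using c0 by (simp add: cn_scale)
    also have "\<dots> \<le> c * (1 + m)" by (rule mult_left_mono[OF cD'a]) (use c0 in simp)
    also have "\<dots> = 1" using m0 by (simp add: c_def)
    finally have "cmod (complex_of_real c * a x - complex_of_real c * a y) \<le> nc_dist D' x y"
      by (rule nc_upper[OF cD'])
    then have "c * cmod (a x - a y) \<le> nc_dist D' x y"
      using c0 by (simp add: right_diff_distrib[symmetric] norm_mult)
    then show "cmod (a x - a y) \<le> (1 + m) * nc_dist D' x y"
      using m0 by (simp add: c_def field_simps)
  qed
qed

theorem mainTheorem2:
  fixes D D' :: "complex^'n::finite^'n"
    and k :: nat and i j :: "nat \<Rightarrow> 'n" and w :: "nat \<Rightarrow> real" and x y :: 'n
  assumes "self_adjoint D" and "self_adjoint D'"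
    and "graph_connected D" and "graph_connected D'"
    and "k \<ge> 1"
    and "\<forall>s<k. i s \<noteq> j s"
    and "\<forall>s<k. \<forall>t<k. s \<noteq> t \<longrightarrow> {i s, j s} \<inter> {i t, j t} = {}"
    and "\<forall>p q. (\<forall>s<k. (p, q) \<noteq> (i s, j s) \<and> (p, q) \<noteq> (j s, i s)) \<longrightarrow> D$p$q = D'$p$q"
    and "\<forall>s<k. w s > 0 \<and>
           ((D$(i s)$(j s) = 0 \<and> cmod (D'$(i s)$(j s)) = 1 / w s) \<or>
            (D'$(i s)$(j s) = 0 \<and> cmod (D$(i s)$(j s)) = 1 / w s))"
  shows "(let d = nc_dist D x y; d' = nc_dist D' x y;
              m = Max ((\<lambda>s. nc_dist D (i s) (j s) / w s) ` {..<k});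
              m' = Max ((\<lambda>s. nc_dist D' (i s) (j s) / w s) ` {..<k})
          in d / (1 + m) \<le> d' \<and> d' \<le> (1 + m') * d
             \<and> ((k = 1 \<and> {i 0, j 0} = {x, y}) \<longrightarrow> \<bar>1 / d - 1 / d'\<bar> \<le> 1 / w 0))"
proof -
  have swap8: "\<forall>p q. (\<forall>s<k. (p, q) \<noteq> (i s, j s) \<and> (p, q) \<noteq> (j s, i s)) \<longrightarrow> D'$p$q = D$p$q"
  proof (intro allI impI)
    fix p q assume h: "\<forall>s<k. (p, q) \<noteq> (i s, j s) \<and> (p, q) \<noteq> (j s, i s)"
    have "D$p$q = D'$p$q" using assms(8) h by blast
    then show "D'$p$q = D$p$q" by simp
  qed
  have swap9: "\<forall>s<k. w s > 0 \<and>
           ((D'$(i s)$(j s) = 0 \<and> cmod (D$(i s)$(j s)) = 1 / w s) \<or>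
            (D$(i s)$(j s) = 0 \<and> cmod (D'$(i s)$(j s)) = 1 / w s))"
    using assms(9) by blast
  note c1 = core[OF assms(1-9)]
  note c2 = core[OF assms(2) assms(1) assms(4) assms(3) assms(5) assms(6) assms(7) swap8 swap9]
  define d where "d = nc_dist D x y"
  define d' where "d' = nc_dist D' x y"
  define m where "m = Max ((\<lambda>s. nc_dist D (i s) (j s) / w s) ` {..<k})"
  define m' where "m' = Max ((\<lambda>s. nc_dist D' (i s) (j s) / w s) ` {..<k})"
  have m0: "0 \<le> m" using c1(1) by (simp add: m_def)
  have h1: "d \<le> (1 + m) * d'" using c1(2) by (simp add: d_def d'_def m_def)
  have h2: "d' \<le> (1 + m') * d" using c2(2) by (simp add: d_def d'_def m'_def)
  have p1: "d / (1 + m) \<le> d'" using h1 m0 by (simp add: pos_divide_le_eq mult.commute)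
  have p3: "\<bar>1 / d - 1 / d'\<bar> \<le> 1 / w 0" if k1: "k = 1" and xy: "{i 0, j 0} = {x, y}"
  proof -
    have ne0: "i 0 \<noteq> j 0" using assms(6) k1 by auto
    have w0: "0 < w 0" using assms(9) k1 by auto
    have xy': "x \<noteq> y" using xy ne0 by (auto simp: doubleton_eq_iff)
    have dD: "nc_dist D (i 0) (j 0) = d" and dD': "nc_dist D' (i 0) (j 0) = d'"
      using xy unfolding d_def d'_def by (auto simp: doubleton_eq_iff nc_sym)
    have mm: "m = d / w 0" unfolding m_def using k1 dD by (simp add: lessThan_Suc)
    have mm': "m' = d' / w 0" unfolding m'_def using k1 dD' by (simp add: lessThan_Suc)
    show ?thesis
      by (rule recip_bound) (use h1 h2 mm mm' w0 nc_pos[OF assms(3) xy'] nc_pos[OF assms(4) xy'] in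
        \<open>simp_all add: d_def d'_def\<close>)
  qed
  show ?thesis
    unfolding Let_def d_def[symmetric] d'_def[symmetric] m_def[symmetric] m'_def[symmetric]
    using p1 h2 p3 by blast
qed

end
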